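(* Let $\mathbf F\in\mathcal F_d$. The map $S_{\mathbf F}$ restricted to $\mathcal C^{OS}(\mathbf F)$ is injective; hence it is a bijection from $\mathcal C^{OS}(\mathbf F)$ onto $S_{\mathbf F}(\mathcal C^{OS}(\mathbf F))$.
   Context: $\mathcal F_d$: $d$-tuples $\mathbf F=(\mathbf F_1,\dots,\mathbf F_d)$ of continuous cdf's on $\mathbb R$ with $\mathbf F_{i-1}\ge\mathbf F_i$ for $2\le i\le d$. $\mathcal L^{OS}_d(\mathbf F)$: cdf's of random vectors $X$ with $X_1\le\dots\le X_d$ a.s. and $X_i$ with cdf $\mathbf F_i$. A copula is a cdf on $\mathbb R^d$ with uniform-on-$[0,1]$ marginals; for a cdf $F$ with continuous marginals $F_i$, its copula is $C_F(y)=F(F_1^{-1}(y_1),\dots,F_d^{-1}(y_d))$ with $J^{-1}(t)=\inf\{s:J(s)\ge t\}$. $\mathcal C^{OS}(\mathbf F)=\{C_F:F\in\mathcal L^{OS}_d(\mathbf F)\}$. For a copula $C$, $S_{\mathbf F}(C)$ is the copula of the exchangeable vector $X_\Pi=(X_{\Pi(1)},\dots,X_{\Pi(d)})$, where $X$ has one-dimensional marginal cdf's $\mathbf F$ and copula $C$, and $\Pi$ is independent of $X$ and uniform on the permutations of $\{1,\dots,d\}$ (its marginals are all $G=\frac1d\sum\mathbf F_i$, which is continuous, so this copula is unique). *)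

theory Defs
  imports "HOL-Probability.Probability"
begin

text \<open>Random vectors in R^d are represented by their laws: probability measures on
  the product space with coordinates indexed by 0..d-1 (the paper's 1..d).\<close>

abbreviation Rd :: "nat \<Rightarrow> (nat \<Rightarrow> real) measure" where
  "Rd d \<equiv> PiM {..<d} (\<lambda>_. borel)"

definition is_cdf :: "(real \<Rightarrow> real) \<Rightarrow> bool" where
  "is_cdf J \<longleftrightarrow> (\<exists>M. real_distribution M \<and> cdf M = J)"

definition Fclass :: "nat \<Rightarrow> (nat \<Rightarrow> real \<Rightarrow> real) \<Rightarrow> bool" where
  "Fclass d F \<longleftrightarrow>
     (\<forall>i<d. is_cdf (F i) \<and> continuous_on UNIV (F i)) \<and>
     (\<forall>i. 0 < i \<and> i < d \<longrightarrow> (\<forall>x. F (i - 1) x \<ge> F i x))"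

definition is_law :: "nat \<Rightarrow> (nat \<Rightarrow> real) measure \<Rightarrow> bool" where
  "is_law d P \<longleftrightarrow> prob_space P \<and> sets P = sets (Rd d)"

definition ext_cdf :: "nat \<Rightarrow> (nat \<Rightarrow> real) measure \<Rightarrow> (nat \<Rightarrow> ereal) \<Rightarrow> real" where
  "ext_cdf d P x = measure P {y \<in> space P. \<forall>i<d. ereal (y i) \<le> x i}"

definition marg_cdf :: "(nat \<Rightarrow> real) measure \<Rightarrow> nat \<Rightarrow> real \<Rightarrow> real" where
  "marg_cdf P i t = measure P {y \<in> space P. y i \<le> t}"

text \<open>Generalized inverse J^{-1}(t) = inf {s. J s >= t}, taken in the extended reals
  (inf of the empty set is +oo, of an unbounded-below set -oo).\<close>
definition gen_inv :: "(real \<Rightarrow> real) \<Rightarrow> real \<Rightarrow> ereal" where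
  "gen_inv J t = Inf (ereal ` {s. J s \<ge> t})"

definition copula_of :: "nat \<Rightarrow> (nat \<Rightarrow> real) measure \<Rightarrow> (nat \<Rightarrow> real) \<Rightarrow> real" where
  "copula_of d P y = ext_cdf d P (\<lambda>i. gen_inv (marg_cdf P i) (y i))"

definition LOS :: "nat \<Rightarrow> (nat \<Rightarrow> real \<Rightarrow> real) \<Rightarrow> (nat \<Rightarrow> real) measure set" where
  "LOS d F = {P. is_law d P \<and>
                 (AE y in P. \<forall>i. 0 < i \<and> i < d \<longrightarrow> y (i - 1) \<le> y i) \<and>
                 (\<forall>i<d. marg_cdf P i = F i)}"

definition COS :: "nat \<Rightarrow> (nat \<Rightarrow> real \<Rightarrow> real) \<Rightarrow> ((nat \<Rightarrow> real) \<Rightarrow> real) set" where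
  "COS d F = copula_of d ` LOS d F"

definition perm_mix :: "nat \<Rightarrow> (nat \<Rightarrow> real) measure \<Rightarrow> (nat \<Rightarrow> real) measure" where
  "perm_mix d P =
     distr (measure_pmf (pmf_of_set {\<pi>. \<pi> permutes {..<d}}) \<Otimes>\<^sub>M P) (Rd d)
       (\<lambda>(\<pi>, x). restrict (\<lambda>i. x (\<pi> i)) {..<d})"

text \<open>S_F(C): the copula of X_Pi, where X has marginal cdfs F and copula C
  (such a law is unique when the marginals are continuous).\<close>
definition S_F :: "nat \<Rightarrow> (nat \<Rightarrow> real \<Rightarrow> real) \<Rightarrow> ((nat \<Rightarrow> real) \<Rightarrow> real) \<Rightarrow> ((nat \<Rightarrow> real) \<Rightarrow> real)" where
  "S_F d F C = copula_of d (perm_mix d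
     (SOME P. is_law d P \<and> (\<forall>i<d. marg_cdf P i = F i) \<and> copula_of d P = C))"

end

theory Submission
  imports Defs
begin

lemma space_law: "is_law d P \<Longrightarrow> space P = PiE {..<d} (\<lambda>_. UNIV)"
  unfolding is_law_def by (auto dest!: sets_eq_imp_space_eq simp: space_PiM)

lemma sets_Rd_gen:
  "sets (Rd d) = sigma_sets (PiE {..<d} (\<lambda>_. UNIV))
     {{f \<in> PiE {..<d} (\<lambda>_. UNIV). \<forall>i<d. f i \<le> x i} | x. True}"
proof -
  have "sets (Rd d) = sets (PiM {..<d} (\<lambda>_. sigma UNIV (range (\<lambda>a. {..a::real}))))"
    by (rule sets_PiM_cong) (simp_all add: borel_eq_atMost[symmetric])
  also have "\<dots> = sets (sigma (PiE {..<d} (\<lambda>_. UNIV))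
      {{f\<in>(\<Pi>\<^sub>E i\<in>{..<d}. UNIV). \<forall>i\<in>j. f i \<in> A i} | A j. j \<in> {{..<d}} \<and> A \<in> Pi j (\<lambda>_. range (\<lambda>a. {..a::real}))})"
  proof -
    have c: "\<exists>S\<subseteq>range atMost. countable S \<and> (UNIV::real set) = \<Union>S"
    proof (intro exI[of _ "range (\<lambda>n::nat. {..real n})"] conjI)
      show "UNIV = \<Union> (range (\<lambda>n::nat. {..real n}))"
      proof (intro set_eqI iffI)
        fix x :: real
        obtain n :: nat where "x \<le> real n" using real_arch_simple by blast
        then show "x \<in> \<Union> (range (\<lambda>n::nat. {..real n}))" by blast
      qed simp
    qed (auto simp: countable_rat)

    show ?thesis
      apply (rule sets_PiM_sigma[where \<Omega>="\<lambda>_. UNIV" and E="\<lambda>_. range atMost" and I="{..<d}" and J="{{..<d}}"])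
      apply (rule c)
      apply simp apply simp apply simp done
  qed
  also have "{{f\<in>(\<Pi>\<^sub>E i\<in>{..<d}. UNIV). \<forall>i\<in>j. f i \<in> A i} | A j. j \<in> {{..<d}} \<and> A \<in> Pi j (\<lambda>_. range (\<lambda>a. {..a::real}))}
     = {{f \<in> PiE {..<d} (\<lambda>_. UNIV). \<forall>i<d. f i \<le> x i} | x. True}"
  proof safe
    fix A :: "nat \<Rightarrow> real set" assume A: "A \<in> Pi {..<d} (\<lambda>_. range atMost)"
    define x where "x i = (SOME a. A i = {..a})" for i
    have "\<forall>i<d. A i = {..x i}" using A unfolding x_def Pi_def by (auto intro: someI)
    then show "\<exists>x. {f \<in> \<Pi>\<^sub>E i\<in>{..<d}. UNIV. \<forall>i\<in>{..<d}. f i \<in> A i} =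
          {f \<in> \<Pi>\<^sub>E i\<in>{..<d}. UNIV. \<forall>i<d. f i \<le> x i} \<and> True"
      by (intro exI[of _ x]) auto
  next
    fix x :: "nat \<Rightarrow> real"
    show "\<exists>A j. {f \<in> \<Pi>\<^sub>E i\<in>{..<d}. UNIV. \<forall>i<d. f i \<le> x i} =
          {f \<in> \<Pi>\<^sub>E i\<in>{..<d}. UNIV. \<forall>i\<in>j. f i \<in> A i} \<and> j \<in> {{..<d}} \<and> A \<in> Pi j (\<lambda>_. range atMost)"
      by (intro exI[of _ "\<lambda>i. {..x i}"] exI[of _ "{..<d}"]) auto
  qed
  also have "sets (sigma (PiE {..<d} (\<lambda>_. UNIV)) {{f \<in> PiE {..<d} (\<lambda>_. UNIV). \<forall>i<d. f i \<le> x i} | x::nat\<Rightarrow>real. True})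
    = sigma_sets (PiE {..<d} (\<lambda>_. UNIV)) {{f \<in> PiE {..<d} (\<lambda>_. UNIV). \<forall>i<d. f i \<le> x i} | x. True}"
    by (rule sets_measure_of) blast
  finally show ?thesis .
qed


lemma law_eqI:
  assumes P: "is_law d P" and Q: "is_law d Q"
  and eq: "\<And>x. measure P {y\<in>space P. \<forall>i<d. y i \<le> x i} = measure Q {y\<in>space Q. \<forall>i<d. y i \<le> x i}"
  shows "P = Q"
proof -
  interpret P: prob_space P using P unfolding is_law_def by simp
  interpret Q: prob_space Q using Q unfolding is_law_def by simp
  define \<Omega> where "\<Omega> = (PiE {..<d} (\<lambda>_. UNIV) :: (nat \<Rightarrow> real) set)"
  define E where "E = {{f \<in> \<Omega>. \<forall>i<d. f i \<le> x i} | x. True}"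
  have sp: "space P = \<Omega>" "space Q = \<Omega>" using space_law[OF P] space_law[OF Q] \<Omega>_def by simp_all
  have Is: "Int_stable E"
  proof (rule Int_stableI)
    fix a b assume "a \<in> E" "b \<in> E"
    then obtain x y where ab: "a = {f \<in> \<Omega>. \<forall>i<d. f i \<le> x i}" "b = {f \<in> \<Omega>. \<forall>i<d. f i \<le> y i}"
      unfolding E_def by blast
    have "a \<inter> b = {f \<in> \<Omega>. \<forall>i<d. f i \<le> min (x i) (y i)}" unfolding ab by auto
    then show "a \<inter> b \<in> E" unfolding E_def
      by (intro CollectI exI[of _ "\<lambda>i. min (x i) (y i)"]) simp
  qed
  have EP: "E \<subseteq> Pow \<Omega>" unfolding E_def by blast
  have sets: "sets P = sigma_sets \<Omega> E" "sets Q = sigma_sets \<Omega> E"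
    using P Q sets_Rd_gen unfolding is_law_def E_def \<Omega>_def by simp_all
  have eqE: "emeasure P X = emeasure Q X" if "X \<in> E" for X
  proof -
    obtain x where X: "X = {f \<in> \<Omega>. \<forall>i<d. f i \<le> x i}" using \<open>X \<in> E\<close> unfolding E_def by blast
    have "measure P X = measure Q X" using eq[of x] unfolding X sp by simp
    then show ?thesis by (simp add: P.emeasure_eq_measure Q.emeasure_eq_measure)
  qed
  define A where "A n = {f \<in> \<Omega>. \<forall>i<d. f i \<le> real n}" for n :: nat
  have AE: "range A \<subseteq> E"
  proof
    fix X assume "X \<in> range A"
    then obtain n where "X = A n" by blast
    then show "X \<in> E" unfolding A_def E_def
      by (intro CollectI exI[of _ "\<lambda>i. real n"]) simp
  qed
  have AU: "(\<Union>n. A n) = \<Omega>"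
  proof (intro set_eqI iffI)
    fix f assume f: "f \<in> \<Omega>"
    obtain n :: nat where n: "Max (insert 0 (f ` {..<d})) \<le> real n" using real_arch_simple by blast
    have "\<forall>i<d. f i \<le> real n"
    proof (intro allI impI)
      fix i assume "i < d"
      then have "f i \<le> Max (insert 0 (f ` {..<d}))" by (intro Max_ge) auto
      then show "f i \<le> real n" using n by linarith
    qed
    then show "f \<in> (\<Union>n. A n)" using f unfolding A_def by blast
  qed (auto simp: A_def)
  show ?thesis
    by (rule measure_eqI_generator_eq[OF Is EP eqE sets AE AU]) simp_all
qed

lemma law_comp_meas:
  assumes P: "is_law d P" shows "(\<lambda>y. y i) \<in> borel_measurable P"
proof (cases "i < d")
  case True
  have "(\<lambda>y. y i) \<in> borel_measurable (Rd d)"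
    by (rule measurable_component_singleton) (use True in simp)
  then show ?thesis using P unfolding is_law_def by (simp cong: measurable_cong_sets)
next
  case False
  have "\<forall>y\<in>space P. y i = undefined"
    using False by (simp add: space_law[OF P] PiE_def extensional_def)
  then show ?thesis by (subst measurable_cong[where g="\<lambda>y. undefined"]) auto
qed

lemma marg_le_null:
  assumes P: "is_law d P" and s: "s \<le> x" and Ms: "marg_cdf P i x \<le> marg_cdf P i s"
  shows "{y\<in>space P. s < y i \<and> y i \<le> x} \<in> null_sets P"
proof -
  interpret prob_space P using P unfolding is_law_def by simp
  have m[measurable]: "(\<lambda>y. y i) \<in> borel_measurable P" using P by (rule law_comp_meas)
  have A: "{y\<in>space P. y i \<le> x} \<in> sets P" "{y\<in>space P. y i \<le> s} \<in> sets P" by measurable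
  have eq: "{y\<in>space P. s < y i \<and> y i \<le> x} = {y\<in>space P. y i \<le> x} - {y\<in>space P. y i \<le> s}" by auto
  have "measure P ({y\<in>space P. y i \<le> x} - {y\<in>space P. y i \<le> s}) = 
     measure P {y\<in>space P. y i \<le> x} - measure P {y\<in>space P. y i \<le> s}"
    by (rule finite_measure_Diff[OF A]) (use s in auto)
  also have "\<dots> \<le> 0" using Ms unfolding marg_cdf_def by simp
  finally have "measure P ({y\<in>space P. y i \<le> x} - {y\<in>space P. y i \<le> s}) = 0"
    using measure_nonneg[of P] by (meson order_antisym)
  then show ?thesis unfolding eq using A
    by (simp add: emeasure_eq_measure null_sets_def)
qed

lemma cdf_copula:
  assumes P: "is_law d P"
  shows "measure P {y\<in>space P. \<forall>i<d. y i \<le> x i} = copula_of d P (\<lambda>i. marg_cdf P i (x i))"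
proof -
  interpret prob_space P using P unfolding is_law_def by simp
  define a where "a i = gen_inv (marg_cdf P i) (marg_cdf P i (x i))" for i
  have ax: "a i \<le> ereal (x i)" for i
    unfolding a_def gen_inv_def by (rule Inf_lower) simp
  have AEi: "AE y in P. y i \<le> x i \<longrightarrow> ereal (y i) \<le> a i" for i
  proof -
    have "AE y in P. \<forall>q\<in>\<rat>. a i < ereal q \<longrightarrow> \<not> (q < y i \<and> y i \<le> x i)"
    proof (subst AE_ball_countable)
      show "countable \<rat>" by (rule countable_rat)
      show "\<forall>q\<in>\<rat>. AE y in P. a i < ereal q \<longrightarrow> \<not> (q < y i \<and> y i \<le> x i)"
      proof (intro ballI)
        fix q :: real
        show "AE y in P. a i < ereal q \<longrightarrow> \<not> (q < y i \<and> y i \<le> x i)"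
        proof (cases "a i < ereal q \<and> q \<le> x i")
          case True
          then obtain s where s: "marg_cdf P i (x i) \<le> marg_cdf P i s" "ereal s < ereal q"
            unfolding a_def gen_inv_def Inf_less_iff by auto
          have "{y\<in>space P. s < y i \<and> y i \<le> x i} \<in> null_sets P"
            by (rule marg_le_null[OF P _ s(1)]) (use s True in simp)
          then show ?thesis
            by (rule AE_I') (use s in auto)
        next
          case False
          then show ?thesis by (intro always_eventually) auto
        qed
      qed
    qed
    then show ?thesis
    proof (rule AE_mp, intro AE_I2 impI)
      fix y assume q: "\<forall>q\<in>\<rat>. a i < ereal q \<longrightarrow> \<not> (q < y i \<and> y i \<le> x i)" and yx: "y i \<le> x i"
      show "ereal (y i) \<le> a i"
      proof (rule ccontr)
        assume "\<not> ereal (y i) \<le> a i"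
        then have lt: "a i < ereal (y i)" by simp
        obtain q where qQ: "q \<in> \<rat>" "a i < ereal q" "q < y i"
        proof (cases "a i")
          case (real r)
          then have "r < y i" using lt by simp
          then obtain q where "q \<in> \<rat>" "r < q" "q < y i" using Rats_dense_in_real by blast
          then show ?thesis using that real by simp
        next
          case PInf then show ?thesis using lt by simp
        next
          case MInf
          have h: "real_of_int (\<lfloor>y i\<rfloor> - 1) < y i" by linarith
          show ?thesis by (rule that[of "real_of_int (\<lfloor>y i\<rfloor> - 1)"]) (use MInf h in auto)
        qed
        then show False using q yx by auto
      qed
    qed
  qed
  have AE: "AE y in P. (\<forall>i<d. y i \<le> x i) \<longleftrightarrow> (\<forall>i<d. ereal (y i) \<le> a i)"
  proof -
    have "AE y in P. \<forall>i\<in>{..<d}. y i \<le> x i \<longrightarrow> ereal (y i) \<le> a i"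
      by (rule AE_finite_allI) (use AEi in auto)
    then show ?thesis
    proof (rule AE_mp, intro AE_I2 impI)
      fix y assume "\<forall>i\<in>{..<d}. y i \<le> x i \<longrightarrow> ereal (y i) \<le> a i"
      moreover have "ereal (y i) \<le> a i \<Longrightarrow> y i \<le> x i" for i
        using ax[of i] by (metis ereal_less_eq(3) order_trans)
      ultimately show "(\<forall>i<d. y i \<le> x i) \<longleftrightarrow> (\<forall>i<d. ereal (y i) \<le> a i)" by auto
    qed
  qed
  have m[measurable]: "\<And>i. (\<lambda>y. y i) \<in> borel_measurable P" using P by (rule law_comp_meas)
  have "measure P {y\<in>space P. \<forall>i<d. y i \<le> x i} = measure P {y\<in>space P. \<forall>i<d. ereal (y i) \<le> a i}"
    by (rule measure_eq_AE) (use AE in auto; measurable)+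
  then show ?thesis unfolding copula_of_def ext_cdf_def a_def by simp
qed

definition Perms :: "nat \<Rightarrow> (nat \<Rightarrow> nat) set" where
  "Perms d = {\<pi>. \<pi> permutes {..<d}}"

lemma Perms_fin: "finite (Perms d)" unfolding Perms_def by (rule finite_permutations) simp
lemma Perms_ne: "Perms d \<noteq> {}" unfolding Perms_def using permutes_id by blast

definition pmap :: "nat \<Rightarrow> (nat \<Rightarrow> nat) \<times> (nat \<Rightarrow> real) \<Rightarrow> (nat \<Rightarrow> real)" where
  "pmap d = (\<lambda>(\<pi>, x). restrict (\<lambda>i. x (\<pi> i)) {..<d})"

lemma pmap_meas:
  assumes P: "is_law d P"
  shows "pmap d \<in> measurable (measure_pmf p \<Otimes>\<^sub>M P) (Rd d)"
proof -
  have m[measurable]: "\<And>i. (\<lambda>y. y i) \<in> borel_measurable P" using P by (rule law_comp_meas)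
  let ?I = "PiE {..<d} (\<lambda>_. UNIV::nat set)"
  have f: "(\<lambda>z. restrict (\<lambda>i. snd z (\<rho> i)) {..<d}) \<in> measurable (measure_pmf p \<Otimes>\<^sub>M P) (Rd d)" for \<rho>
    by measurable
  have g: "(\<lambda>z. restrict (fst z) {..<d}) \<in> measurable (measure_pmf p \<Otimes>\<^sub>M P) (count_space ?I)"
  proof (rule measurable_compose[OF measurable_fst])
    show "(\<lambda>\<pi>. restrict \<pi> {..<d}) \<in> measurable (measure_pmf p) (count_space ?I)"
      by simp
  qed
  have c: "countable ?I" by (rule countable_PiE) auto
  have "(\<lambda>z. restrict (\<lambda>i. snd z (restrict (fst z) {..<d} i)) {..<d}) \<in> measurable (measure_pmf p \<Otimes>\<^sub>M P) (Rd d)"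
    by (rule measurable_compose_countable'[OF f g c])
  moreover have "(\<lambda>z. restrict (\<lambda>i. snd z (restrict (fst z) {..<d} i)) {..<d}) = pmap d"
    unfolding pmap_def by (auto simp: fun_eq_iff)
  ultimately show ?thesis by simp
qed

lemma perm_mix_law:
  assumes P: "is_law d P"
  shows "is_law d (perm_mix d P)"
proof -
  have "prob_space (measure_pmf (pmf_of_set (Perms d)) \<Otimes>\<^sub>M P)"
    by (rule prob_space_pair) (use P in \<open>auto simp: is_law_def prob_space_measure_pmf\<close>)
  then have "prob_space (distr (measure_pmf (pmf_of_set (Perms d)) \<Otimes>\<^sub>M P) (Rd d) (pmap d))"
    by (rule prob_space.prob_space_distr) (rule pmap_meas[OF P])
  then show ?thesis
    unfolding is_law_def perm_mix_def pmap_def[symmetric] Perms_def[symmetric] by simp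
qed

lemma perm_mix_emeasure:
  assumes P: "is_law d P" and E: "E \<in> sets (Rd d)"
  shows "emeasure (perm_mix d P) E =
    (\<Sum>\<pi>\<in>Perms d. emeasure P {x\<in>space P. restrict (\<lambda>i. x (\<pi> i)) {..<d} \<in> E} * pmf (pmf_of_set (Perms d)) \<pi>)"
proof -
  interpret P: prob_space P using P unfolding is_law_def by simp
  let ?p = "pmf_of_set (Perms d)"
  let ?M = "measure_pmf ?p \<Otimes>\<^sub>M P"
  have g: "pmap d \<in> measurable ?M (Rd d)" by (rule pmap_meas[OF P])
  have X: "pmap d -` E \<inter> space ?M \<in> sets ?M" using g E by (rule measurable_sets)
  have "emeasure (perm_mix d P) E = emeasure ?M (pmap d -` E \<inter> space ?M)"
    unfolding perm_mix_def pmap_def[symmetric] Perms_def[symmetric]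
    by (rule emeasure_distr[OF g E])
  also have "\<dots> = (\<integral>\<^sup>+\<pi>. emeasure P (Pair \<pi> -` (pmap d -` E \<inter> space ?M)) \<partial>measure_pmf ?p)"
    by (rule P.emeasure_pair_measure_alt[OF X])
  also have "\<dots> = (\<integral>\<^sup>+\<pi>. emeasure P {x\<in>space P. restrict (\<lambda>i. x (\<pi> i)) {..<d} \<in> E} \<partial>measure_pmf ?p)"
    by (intro nn_integral_cong arg_cong[where f="emeasure P"]) (auto simp: space_pair_measure pmap_def)
  also have "\<dots> = (\<Sum>\<pi>\<in>Perms d. emeasure P {x\<in>space P. restrict (\<lambda>i. x (\<pi> i)) {..<d} \<in> E} * pmf ?p \<pi>)"
    using nn_integral_measure_pmf_finite[of ?p] Perms_fin Perms_ne by simp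
  finally show ?thesis .
qed

lemma copula_cong: "(\<And>i. i < d \<Longrightarrow> y i = y' i) \<Longrightarrow> copula_of d P y = copula_of d P y'"
  unfolding copula_of_def ext_cdf_def by simp

lemma law_unique:
  assumes P: "is_law d P" and Q: "is_law d Q"
  and marg: "\<And>i. i < d \<Longrightarrow> marg_cdf P i = marg_cdf Q i"
  and cop: "copula_of d P = copula_of d Q"
  shows "P = Q"
proof (rule law_eqI[OF P Q])
  fix x :: "nat \<Rightarrow> real"
  have "measure P {y\<in>space P. \<forall>i<d. y i \<le> x i} = copula_of d P (\<lambda>i. marg_cdf P i (x i))"
    by (rule cdf_copula[OF P])
  also have "\<dots> = copula_of d Q (\<lambda>i. marg_cdf P i (x i))" by (simp add: cop)
  also have "\<dots> = copula_of d Q (\<lambda>i. marg_cdf Q i (x i))"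
    by (rule copula_cong) (simp add: marg)
  also have "\<dots> = measure Q {y\<in>space Q. \<forall>i<d. y i \<le> x i}"
    by (rule cdf_copula[OF Q, symmetric])
  finally show "measure P {y\<in>space P. \<forall>i<d. y i \<le> x i} = measure Q {y\<in>space Q. \<forall>i<d. y i \<le> x i}" .
qed

lemma space_perm_mix: "space (perm_mix d P) = PiE {..<d} (\<lambda>_. UNIV)"
  unfolding perm_mix_def by (simp add: space_PiM)

lemma perm_mix_marg:
  assumes P: "is_law d P" and Q: "is_law d Q"
  and marg: "\<And>i. i < d \<Longrightarrow> marg_cdf P i = marg_cdf Q i" and i: "i < d"
  shows "marg_cdf (perm_mix d P) i = marg_cdf (perm_mix d Q) i"
proof
  fix t
  interpret P: prob_space P using P unfolding is_law_def by simp
  interpret Q: prob_space Q using Q unfolding is_law_def by simp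
  interpret PP: prob_space "perm_mix d P" using perm_mix_law[OF P] unfolding is_law_def by simp
  interpret QQ: prob_space "perm_mix d Q" using perm_mix_law[OF Q] unfolding is_law_def by simp
  define E where "E = {y\<in>space (Rd d). y i \<le> t}"
  have E: "E \<in> sets (Rd d)" unfolding E_def by measurable (simp add: i)
  have pre: "{x\<in>space R. restrict (\<lambda>j. x (\<pi> j)) {..<d} \<in> E} = {x\<in>space R. x (\<pi> i) \<le> t}" for R \<pi>
    unfolding E_def using i by (auto simp: space_PiM)
  have tm: "emeasure P {x\<in>space P. x (\<pi> i) \<le> t} = emeasure Q {x\<in>space Q. x (\<pi> i) \<le> t}"
    if "\<pi> \<in> Perms d" for \<pi>
  proof -
    have "\<pi> i < d" using that i permutes_in_image[of \<pi> "{..<d}" i] unfolding Perms_def by simp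
    then have "marg_cdf P (\<pi> i) t = marg_cdf Q (\<pi> i) t" using marg by simp
    then show ?thesis unfolding marg_cdf_def by (simp add: P.emeasure_eq_measure Q.emeasure_eq_measure)
  qed
  have "emeasure (perm_mix d P) E = emeasure (perm_mix d Q) E"
    unfolding perm_mix_emeasure[OF P E] perm_mix_emeasure[OF Q E] pre
    by (intro sum.cong refl) (simp add: tm)
  then have "measure (perm_mix d P) E = measure (perm_mix d Q) E"
    by (simp add: PP.emeasure_eq_measure QQ.emeasure_eq_measure)
  moreover have "{y\<in>space (perm_mix d P). y i \<le> t} = E" "{y\<in>space (perm_mix d Q). y i \<le> t} = E"
    unfolding E_def space_perm_mix by (simp_all add: space_PiM)
  ultimately show "marg_cdf (perm_mix d P) i t = marg_cdf (perm_mix d Q) i t"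
    unfolding marg_cdf_def by simp
qed

definition Bset :: "nat \<Rightarrow> (nat \<Rightarrow> real) \<Rightarrow> (nat \<Rightarrow> real) set" where
  "Bset d a = {y\<in>space (Rd d). \<forall>k\<in>{..<d}. real (Suc k) \<le> (\<Sum>i\<in>{..<d}. if y i \<le> a k then 1 else 0)}"

lemma Bset_meas: "Bset d a \<in> sets (Rd d)"
  unfolding Bset_def by measurable

lemma sum_if_card:
  fixes d :: nat and y :: "nat \<Rightarrow> real" and c :: real
  shows "(\<Sum>i\<in>{..<d}. if y i \<le> c then 1 else 0 :: real) = real (card {i\<in>{..<d}. y i \<le> c})"
proof -
  have "(\<Sum>i\<in>{..<d}. if y i \<le> c then 1 else 0 :: real) = (\<Sum>i\<in>{..<d}. of_bool (y i \<le> c))"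
    by (simp add: of_bool_def)
  also have "\<dots> = real (card ({..<d} \<inter> {i. y i \<le> c}))" by (rule sum_of_bool_eq) simp_all
  also have "{..<d} \<inter> {i. y i \<le> c} = {i\<in>{..<d}. y i \<le> c}" by blast
  finally show ?thesis .
qed

lemma Bset_perm:
  assumes \<pi>: "\<pi> \<in> Perms d" and y: "y \<in> space (Rd d)"
  shows "restrict (\<lambda>i. y (\<pi> i)) {..<d} \<in> Bset d a \<longleftrightarrow> y \<in> Bset d a"
proof -
  have p: "\<pi> permutes {..<d}" using \<pi> unfolding Perms_def by simp
  have "(\<Sum>i\<in>{..<d}. if restrict (\<lambda>i. y (\<pi> i)) {..<d} i \<le> c then 1 else 0 :: real)
      = (\<Sum>i\<in>{..<d}. if y i \<le> c then 1 else 0)" for c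
  proof -
    have "(\<Sum>i\<in>{..<d}. if restrict (\<lambda>i. y (\<pi> i)) {..<d} i \<le> c then 1 else 0 :: real)
       = (\<Sum>i\<in>{..<d}. ((\<lambda>j. if y j \<le> c then 1 else 0 :: real) \<circ> \<pi>) i)"
      by (intro sum.cong) auto
    also have "\<dots> = (\<Sum>i\<in>{..<d}. if y i \<le> c then 1 else 0)"
      by (rule sum.permute[OF p, symmetric])
    finally show ?thesis .
  qed
  moreover have "restrict (\<lambda>i. y (\<pi> i)) {..<d} \<in> space (Rd d)" by (simp add: space_PiM)
  ultimately show ?thesis using y unfolding Bset_def by simp
qed

lemma sorted_adj:
  fixes x :: "nat \<Rightarrow> real" and i j d :: nat
  assumes adj: "\<forall>i. 0 < i \<and> i < d \<longrightarrow> x (i - 1) \<le> (x i :: real)"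
  shows "i \<le> j \<Longrightarrow> j < d \<Longrightarrow> x i \<le> x j"
proof (induction j)
  case 0 then show ?case by simp
next
  case (Suc j)
  show ?case
  proof (cases "i = Suc j")
    case False
    then have "i \<le> j" using Suc.prems by simp
    then have "x i \<le> x j" using Suc by simp
    also have "x j \<le> x (Suc j)" using adj Suc.prems by (metis diff_Suc_1 zero_less_Suc)
    finally show ?thesis .
  qed simp
qed

lemma Bset_sorted:
  assumes adj: "\<forall>i. 0 < i \<and> i < d \<longrightarrow> x (i - 1) \<le> (x i :: real)" and x: "x \<in> space (Rd d)"
  shows "x \<in> Bset d a \<longleftrightarrow> (\<forall>k<d. x k \<le> a k)"
proof
  assume B: "x \<in> Bset d a"
  show "\<forall>k<d. x k \<le> a k"
  proof (intro allI impI, rule ccontr)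
    fix k assume k: "k < d" and "\<not> x k \<le> a k"
    then have lt: "a k < x k" by simp
    have "{i\<in>{..<d}. x i \<le> a k} \<subseteq> {..<k}"
    proof
      fix i assume "i \<in> {i\<in>{..<d}. x i \<le> a k}"
      then have "i < d" "x i \<le> a k" by auto
      show "i \<in> {..<k}"
      proof (rule ccontr)
        assume "i \<notin> {..<k}"
        then have "x k \<le> x i" using sorted_adj[OF adj, of k i] \<open>i < d\<close> by simp
        then show False using lt \<open>x i \<le> a k\<close> by simp
      qed
    qed
    then have "card {i\<in>{..<d}. x i \<le> a k} \<le> k" using card_mono[of "{..<k}"] by fastforce
    moreover have "real (Suc k) \<le> real (card {i\<in>{..<d}. x i \<le> a k})"
      using B k unfolding Bset_def sum_if_card by simp
    ultimately show False by simp
  qed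
next
  assume le: "\<forall>k<d. x k \<le> a k"
  have "real (Suc k) \<le> real (card {i\<in>{..<d}. x i \<le> a k})" if k: "k < d" for k
  proof -
    have "{..k} \<subseteq> {i\<in>{..<d}. x i \<le> a k}"
    proof
      fix i assume "i \<in> {..k}"
      then have "i \<le> k" by simp
      then have "x i \<le> x k" using sorted_adj[OF adj, of i k] k by simp
      then show "i \<in> {i\<in>{..<d}. x i \<le> a k}" using le k \<open>i \<le> k\<close> by force
    qed
    then have "card {..k} \<le> card {i\<in>{..<d}. x i \<le> a k}" by (intro card_mono) auto
    then show ?thesis by simp
  qed
  then show "x \<in> Bset d a" using x unfolding Bset_def sum_if_card by simp
qed

lemma perm_mix_Bset:
  assumes P: "is_law d P"
  shows "emeasure (perm_mix d P) (Bset d a) = emeasure P (Bset d a)"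
proof -
  let ?p = "pmf_of_set (Perms d)"
  have pre: "{x\<in>space P. restrict (\<lambda>i. x (\<pi> i)) {..<d} \<in> Bset d a} = Bset d a" if "\<pi> \<in> Perms d" for \<pi>
    using Bset_perm[OF that] space_law[OF P] unfolding Bset_def
    by (auto simp: space_PiM)
  have "emeasure (perm_mix d P) (Bset d a) = (\<Sum>\<pi>\<in>Perms d. emeasure P (Bset d a) * ennreal (pmf ?p \<pi>))"
    unfolding perm_mix_emeasure[OF P Bset_meas] by (intro sum.cong refl) (simp add: pre)
  also have "\<dots> = emeasure P (Bset d a) * ennreal (\<Sum>\<pi>\<in>Perms d. pmf ?p \<pi>)"
    by (simp add: sum_distrib_left[symmetric])
  also have "(\<Sum>\<pi>\<in>Perms d. pmf ?p \<pi>) = 1"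
    by (rule sum_pmf_eq_1) (simp_all add: Perms_fin Perms_ne)
  finally show ?thesis by simp
qed

lemma recover:
  assumes P: "P \<in> LOS d F" and Q: "Q \<in> LOS d F" and eq: "perm_mix d P = perm_mix d Q"
  shows "P = Q"
proof -
  have PL: "is_law d P" and QL: "is_law d Q" using P Q unfolding LOS_def by auto
  interpret P: prob_space P using PL unfolding is_law_def by simp
  interpret Q: prob_space Q using QL unfolding is_law_def by simp
  have key: "measure R {y\<in>space R. \<forall>i<d. y i \<le> a i} = measure R (Bset d a)" if R: "R \<in> LOS d F" for R a
  proof -
    have RL: "is_law d R" using R unfolding LOS_def by auto
    have m[measurable]: "\<And>i. (\<lambda>y. y i) \<in> borel_measurable R" using RL by (rule law_comp_meas)
    have sp: "space R = space (Rd d)" using space_law[OF RL] by (simp add: space_PiM)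
    have sR: "sets R = sets (Rd d)" using RL unfolding is_law_def by simp
    have AEs: "AE y in R. \<forall>i. 0 < i \<and> i < d \<longrightarrow> y (i - 1) \<le> y i" using R unfolding LOS_def by auto
    show ?thesis
    proof (rule measure_eq_AE)
      show "AE y in R. (y \<in> {y\<in>space R. \<forall>i<d. y i \<le> a i}) = (y \<in> Bset d a)"
        using AEs
      proof (rule AE_mp, intro AE_I2 impI)
        fix y assume "y \<in> space R" and "\<forall>i. 0 < i \<and> i < d \<longrightarrow> y (i - 1) \<le> y i"
        then show "(y \<in> {y\<in>space R. \<forall>i<d. y i \<le> a i}) = (y \<in> Bset d a)"
          using Bset_sorted[of d y a] sp by auto
      qed
      show "{y\<in>space R. \<forall>i<d. y i \<le> a i} \<in> sets R" by measurable
      show "Bset d a \<in> sets R" using sR Bset_meas by simp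
    qed
  qed
  show ?thesis
  proof (rule law_eqI[OF PL QL])
    fix a
    have "emeasure P (Bset d a) = emeasure Q (Bset d a)"
      using perm_mix_Bset[OF PL, of a] perm_mix_Bset[OF QL, of a] eq by simp
    then have "measure P (Bset d a) = measure Q (Bset d a)"
      by (simp add: P.emeasure_eq_measure Q.emeasure_eq_measure)
    then show "measure P {y\<in>space P. \<forall>i<d. y i \<le> a i} = measure Q {y\<in>space Q. \<forall>i<d. y i \<le> a i}"
      using key[OF P, of a] key[OF Q, of a] by simp
  qed
qed

lemma S_F_LOS:
  assumes P: "P \<in> LOS d F"
  shows "S_F d F (copula_of d P) = copula_of d (perm_mix d P)"
proof -
  let ?Q = "SOME Q. is_law d Q \<and> (\<forall>i<d. marg_cdf Q i = F i) \<and> copula_of d Q = copula_of d P"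
  have PL: "is_law d P" and Pm: "\<forall>i<d. marg_cdf P i = F i" using P unfolding LOS_def by auto
  have ex: "is_law d P \<and> (\<forall>i<d. marg_cdf P i = F i) \<and> copula_of d P = copula_of d P"
    using PL Pm by simp
  have Q: "is_law d ?Q \<and> (\<forall>i<d. marg_cdf ?Q i = F i) \<and> copula_of d ?Q = copula_of d P"
    by (rule someI[of _ P]) (rule ex)
  have "?Q = P"
    by (rule law_unique) (use Q PL Pm in auto)
  then show ?thesis unfolding S_F_def by simp
qed

theorem mainTheorem7:
  fixes d :: nat and F :: "nat \<Rightarrow> real \<Rightarrow> real"
  assumes "Fclass d F"
  shows "inj_on (S_F d F) (COS d F) \<and> bij_betw (S_F d F) (COS d F) (S_F d F ` COS d F)"
proof -
  have inj: "inj_on (S_F d F) (COS d F)"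
  proof (rule inj_onI)
    fix C1 C2 assume C1: "C1 \<in> COS d F" and C2: "C2 \<in> COS d F" and eq: "S_F d F C1 = S_F d F C2"
    obtain P1 where P1: "P1 \<in> LOS d F" "C1 = copula_of d P1" using C1 unfolding COS_def by blast
    obtain P2 where P2: "P2 \<in> LOS d F" "C2 = copula_of d P2" using C2 unfolding COS_def by blast
    have L1: "is_law d P1" and m1: "\<forall>i<d. marg_cdf P1 i = F i" using P1 unfolding LOS_def by auto
    have L2: "is_law d P2" and m2: "\<forall>i<d. marg_cdf P2 i = F i" using P2 unfolding LOS_def by auto
    have cop: "copula_of d (perm_mix d P1) = copula_of d (perm_mix d P2)"
      using eq S_F_LOS[OF P1(1)] S_F_LOS[OF P2(1)] P1(2) P2(2) by simp
    have "perm_mix d P1 = perm_mix d P2"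
    proof (rule law_unique[OF perm_mix_law[OF L1] perm_mix_law[OF L2] _ cop])
      fix i assume "i < d"
      show "marg_cdf (perm_mix d P1) i = marg_cdf (perm_mix d P2) i"
        by (rule perm_mix_marg[OF L1 L2 _ \<open>i < d\<close>]) (use m1 m2 in simp)
    qed
    then have "P1 = P2" by (rule recover[OF P1(1) P2(1)])
    then show "C1 = C2" using P1(2) P2(2) by simp
  qed
  then show ?thesis using inj_on_imp_bij_betw by blast
qed

end
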